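(* Let $k$ be a field and $A$ an integral domain that is a $k$-algebra, equipped with $k$-linear derivations $\delta_1,\ldots,\delta_m$. Suppose there is a finite-dimensional $k$-vector subspace $V$ of $A$ and a set $\mathcal S$ of ideals of $A$ such that (i) $\delta_i(I)\subseteq I$ for all $i=1,\ldots,m$ and all $I\in\mathcal S$; (ii) $\bigcap\mathcal S=(0)$; (iii) $V\cap I\neq(0)$ for all $I\in\mathcal S$. Then there exists $f\in\operatorname{Frac}(A)\setminus k$ with $\delta_i(f)=0$ for all $i=1,\ldots,m$.
   Context: All algebras are commutative. The derivations are extended to $\operatorname{Frac}(A)$ by the quotient rule. *)

theory Defs
  imports "HOL-Computational_Algebra.Fraction_Field"
begin

text \<open>The field k is represented by its (isomorphic) image in the domain A,
  i.e. a subfield K of A (a k-algebra structure k -> A is injective since A is a domain).\<close>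
definition subfield :: "'a::idom set \<Rightarrow> bool" where
  "subfield K \<longleftrightarrow> 0 \<in> K \<and> 1 \<in> K \<and> (\<forall>x\<in>K. \<forall>y\<in>K. x + y \<in> K \<and> x * y \<in> K \<and> - x \<in> K)
     \<and> (\<forall>x\<in>K. x \<noteq> 0 \<longrightarrow> (\<exists>y\<in>K. x * y = 1))"

definition lin_derivation :: "'a::idom set \<Rightarrow> ('a \<Rightarrow> 'a) \<Rightarrow> bool" where
  "lin_derivation K D \<longleftrightarrow> (\<forall>x y. D (x + y) = D x + D y)
     \<and> (\<forall>x y. D (x * y) = x * D y + y * D x)
     \<and> (\<forall>c\<in>K. \<forall>x. D (c * x) = c * D x)"

definition frac_deriv :: "('a::idom \<Rightarrow> 'a) \<Rightarrow> 'a fract \<Rightarrow> 'a fract" where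
  "frac_deriv D f = (THE g. \<exists>a b. b \<noteq> 0 \<and> f = Fract a b \<and> g = Fract (D a * b - a * D b) (b * b))"

definition is_ideal :: "'a::idom set \<Rightarrow> bool" where
  "is_ideal I \<longleftrightarrow> 0 \<in> I \<and> (\<forall>x\<in>I. \<forall>y\<in>I. x + y \<in> I) \<and> (\<forall>a. \<forall>x\<in>I. a * x \<in> I)"

definition fin_dim_subspace :: "'a::idom set \<Rightarrow> 'a set \<Rightarrow> bool" where
  "fin_dim_subspace K V \<longleftrightarrow> 0 \<in> V \<and> (\<forall>x\<in>V. \<forall>y\<in>V. x + y \<in> V) \<and> (\<forall>c\<in>K. \<forall>x\<in>V. c * x \<in> V)
     \<and> (\<exists>B. finite B \<and> B \<subseteq> V \<and> V = {\<Sum>b\<in>B. c b * b | c. \<forall>b\<in>B. c b \<in> K})"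

end

theory Submission
  imports Defs
begin

lemma frac_deriv_Fract:
  assumes mul: "\<And>x y. D (x * y) = x * D y + y * D x" and b: "b \<noteq> 0"
  shows "frac_deriv D (Fract a b) = Fract (D a * b - a * D b) (b * b)"
  unfolding frac_deriv_def
proof (rule the_equality)
  show "\<exists>a' b'. b' \<noteq> 0 \<and> Fract a b = Fract a' b' \<and> Fract (D a * b - a * D b) (b * b) = Fract (D a' * b' - a' * D b') (b' * b')"
    using b by blast
next
  fix g assume "\<exists>a' b'. b' \<noteq> 0 \<and> Fract a b = Fract a' b' \<and> g = Fract (D a' * b' - a' * D b') (b' * b')"
  then obtain a' b' where h: "b' \<noteq> 0" "Fract a b = Fract a' b'" "g = Fract (D a' * b' - a' * D b') (b' * b')" by blast
  from h(2) have e: "a * b' = a' * b" by (simp add: eq_fract b h(1))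
  have e2: "a * D b' + b' * D a = a' * D b + b * D a'" using mul[of a b'] mul[of a' b] e by metis
  have "(D a' * b' - a' * D b') * (b * b) = (D a * b - a * D b) * (b' * b')"
    using e e2 by algebra
  then show "g = Fract (D a * b - a * D b) (b * b)"
    using h b by (simp add: eq_fract)
qed

inductive_set ops :: "(nat \<Rightarrow> 'a::idom \<Rightarrow> 'a) \<Rightarrow> nat \<Rightarrow> ('a \<Rightarrow> 'a) set" for \<delta> m where
  op_id: "(\<lambda>x. x) \<in> ops \<delta> m"
| op_comp: "L \<in> ops \<delta> m \<Longrightarrow> i \<in> {1..m} \<Longrightarrow> (\<lambda>x. \<delta> i (L x)) \<in> ops \<delta> m"
| op_add: "L \<in> ops \<delta> m \<Longrightarrow> M \<in> ops \<delta> m \<Longrightarrow> (\<lambda>x. L x + M x) \<in> ops \<delta> m"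
| op_smul: "L \<in> ops \<delta> m \<Longrightarrow> (\<lambda>x. c * L x) \<in> ops \<delta> m"

lemma op_zero: "(\<lambda>x. 0) \<in> ops \<delta> m"
proof -
  have "(\<lambda>x. 0 * x) \<in> ops \<delta> m" by (rule op_smul[OF op_id])
  then show ?thesis by simp
qed

lemma op_diff: "L \<in> ops \<delta> m \<Longrightarrow> M \<in> ops \<delta> m \<Longrightarrow> (\<lambda>x. L x - M x) \<in> ops \<delta> m"
proof -
  assume "L \<in> ops \<delta> m" "M \<in> ops \<delta> m"
  then have "(\<lambda>x. L x + (-1) * M x) \<in> ops \<delta> m" by (intro op_add op_smul)
  then show ?thesis by simp
qed

lemma op_sum: "finite B \<Longrightarrow> (\<forall>b\<in>B. F b \<in> ops \<delta> m) \<Longrightarrow> (\<lambda>x. \<Sum>b\<in>B. c b * F b x) \<in> ops \<delta> m"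
proof (induction B rule: finite_induct)
  case empty
  then show ?case using op_zero by simp
next
  case (insert y B)
  then have "(\<lambda>x. c y * F y x + (\<Sum>b\<in>B. c b * F b x)) \<in> ops \<delta> m"
    by (intro op_add op_smul) auto
  then show ?case using insert by simp
qed

context
  fixes K :: "'a::idom set" and \<delta> :: "nat \<Rightarrow> 'a \<Rightarrow> 'a" and m :: nat and S :: "'a set set"
  assumes sf: "subfield K"
    and der: "\<And>i. i \<in> {1..m} \<Longrightarrow> lin_derivation K (\<delta> i)"
    and idl: "\<And>I. I \<in> S \<Longrightarrow> is_ideal I"
    and inv: "\<And>i I. i \<in> {1..m} \<Longrightarrow> I \<in> S \<Longrightarrow> \<delta> i ` I \<subseteq> I"
    and int0: "\<Inter> S = {0}"
begin

lemma op_additive: "L \<in> ops \<delta> m \<Longrightarrow> L (x + y) = L x + L y"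
proof (induction rule: ops.induct)
  case (op_comp L i)
  then show ?case using der[OF op_comp.hyps(2)] by (simp add: lin_derivation_def)
qed (auto simp: algebra_simps)

lemma op_klin: "L \<in> ops \<delta> m \<Longrightarrow> c \<in> K \<Longrightarrow> L (c * x) = c * L x"
proof (induction rule: ops.induct)
  case (op_comp L i)
  have "\<delta> i (L (c * x)) = \<delta> i (c * L x)" using op_comp by simp
  also have "\<dots> = c * \<delta> i (L x)" using der[OF op_comp.hyps(2)] op_comp.prems unfolding lin_derivation_def by blast
  finally show ?case .
qed (auto simp: algebra_simps)

lemma op_0: "L \<in> ops \<delta> m \<Longrightarrow> L 0 = 0"
  using op_additive[of L 0 0] by (metis add_cancel_right_right add_0)

lemma op_ideal: "L \<in> ops \<delta> m \<Longrightarrow> I \<in> S \<Longrightarrow> x \<in> I \<Longrightarrow> L x \<in> I"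
proof (induction rule: ops.induct)
  case (op_comp L i)
  then show ?case using inv[OF op_comp.hyps(2) op_comp.prems(1)] by blast
next
  case (op_add L M) then show ?case using idl[OF op_add.prems(1)] by (simp add: is_ideal_def)
next
  case (op_smul L c) then show ?case using idl[OF op_smul.prems(1)] by (simp add: is_ideal_def)
qed simp

lemma op_sum_val: assumes "L \<in> ops \<delta> m" "finite B" "\<forall>b\<in>B. c b \<in> K" shows "L (\<Sum>b\<in>B. c b * b) = (\<Sum>b\<in>B. c b * L b)"
  using assms(2,3) proof (induction B rule: finite_induct)
  case empty then show ?case using op_0 assms(1) by simp
next
  case (insert y B) then show ?case by (simp add: op_additive[OF assms(1)] op_klin[OF assms(1)])
qed

lemma der_0: "i \<in> {1..m} \<Longrightarrow> \<delta> i 0 = 0"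
  using der[of i] unfolding lin_derivation_def by (metis add_cancel_right_right add_0)

lemma der_sum: assumes "i \<in> {1..m}" "finite B" shows "\<delta> i (\<Sum>b\<in>B. f b) = (\<Sum>b\<in>B. \<delta> i (f b))"
  using assms(2) proof (induction B rule: finite_induct)
  case empty then show ?case using der_0 assms(1) by simp
next
  case (insert y B) then show ?case using der[OF assms(1)] by (simp add: lin_derivation_def)
qed


lemma dich:
  assumes "finite B"
  shows "(\<exists>d Lf. d \<noteq> 0 \<and> (\<forall>b\<in>B. Lf b \<in> ops \<delta> m) \<and> (\<forall>b\<in>B. \<forall>b'\<in>B. Lf b b' = (if b = b' then d else 0)))
     \<or> (\<exists>g. (\<exists>b\<in>B. g b \<noteq> 0) \<and> (\<forall>L\<in>ops \<delta> m. (\<Sum>b\<in>B. g b * L b) = 0))"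
  using assms
proof (induction B rule: finite_induct)
  case empty
  show ?case by (intro disjI1 exI[of _ 1]) auto
next
  case (insert x B)
  from insert.IH show ?case
  proof
    assume "\<exists>d Lf. d \<noteq> 0 \<and> (\<forall>b\<in>B. Lf b \<in> ops \<delta> m) \<and> (\<forall>b\<in>B. \<forall>b'\<in>B. Lf b b' = (if b = b' then d else 0))"
    then obtain d Lf where d: "d \<noteq> 0" and Lo: "\<forall>b\<in>B. Lf b \<in> ops \<delta> m"
      and Ld: "\<forall>b\<in>B. \<forall>b'\<in>B. Lf b b' = (if b = b' then d else 0)" by blast
    define M' where "M' M = (\<lambda>y. d * M y - (\<Sum>b\<in>B. M b * Lf b y))" for M :: "'a \<Rightarrow> 'a"
    have M'ops: "M' M \<in> ops \<delta> m" if "M \<in> ops \<delta> m" for M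
      unfolding M'_def using that by (intro op_diff op_smul op_sum insert.hyps Lo)
    have M'B: "M' M b = 0" if "b \<in> B" for M b
    proof -
      have "(\<Sum>b'\<in>B. M b' * Lf b' b) = (\<Sum>b'\<in>B. M b' * (if b' = b then d else 0))"
        using Ld that by (intro sum.cong) auto
      also have "\<dots> = M b * d" using that insert.hyps by (simp add: if_distrib cong: if_cong)
      finally show ?thesis unfolding M'_def by (simp add: mult.commute)
    qed
    show ?thesis
    proof (cases "\<exists>M\<in>ops \<delta> m. M' M x \<noteq> 0")
      case True
      then obtain M where M: "M \<in> ops \<delta> m" "M' M x \<noteq> 0" by blast
      define e where "e = M' M x"
      define Lf' where "Lf' b = (if b = x then (\<lambda>y. d * M' M y) else (\<lambda>y. e * Lf b y - Lf b x * M' M y))" for b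
      have "d * e \<noteq> 0" using d M(2) e_def by simp
      moreover have "\<forall>b\<in>insert x B. Lf' b \<in> ops \<delta> m"
        unfolding Lf'_def using M'ops[OF M(1)] Lo by (auto intro!: op_diff op_smul)
      moreover have "\<forall>b\<in>insert x B. \<forall>b'\<in>insert x B. Lf' b b' = (if b = b' then d * e else 0)"
        using insert.hyps Ld M'B unfolding Lf'_def e_def by auto
      ultimately show ?thesis by blast
    next
      case False
      define g where "g b = (if b = x then d else - Lf b x)" for b
      have "(\<Sum>b\<in>insert x B. g b * L b) = 0" if "L \<in> ops \<delta> m" for L
      proof -
        have "(\<Sum>b\<in>insert x B. g b * L b) = d * L x + (\<Sum>b\<in>B. - Lf b x * L b)"
          using insert.hyps unfolding g_def by (auto intro!: sum.cong)
        also have "\<dots> = M' L x" unfolding M'_def by (simp add: sum_negf mult.commute)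
        finally show ?thesis using False that by auto
      qed
      moreover have "g x \<noteq> 0" using d g_def by simp
      ultimately show ?thesis by blast
    qed
  next
    assume "\<exists>g. (\<exists>b\<in>B. g b \<noteq> 0) \<and> (\<forall>L\<in>ops \<delta> m. (\<Sum>b\<in>B. g b * L b) = 0)"
    then obtain g where g: "\<exists>b\<in>B. g b \<noteq> 0" "\<forall>L\<in>ops \<delta> m. (\<Sum>b\<in>B. g b * L b) = 0" by blast
    have "\<exists>b\<in>insert x B. (g(x:=0)) b \<noteq> 0" using g(1) insert.hyps by auto
    moreover have "\<forall>L\<in>ops \<delta> m. (\<Sum>b\<in>insert x B. (g(x:=0)) b * L b) = 0"
    proof
      fix L assume "L \<in> ops \<delta> m"
      have "(\<Sum>b\<in>insert x B. (g(x:=0)) b * L b) = (\<Sum>b\<in>B. g b * L b)"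
        using insert.hyps by (auto intro!: sum.cong)
      then show "(\<Sum>b\<in>insert x B. (g(x:=0)) b * L b) = 0" using g(2) \<open>L \<in> ops \<delta> m\<close> by simp
    qed
    ultimately show ?thesis by blast
  qed
qed


lemma main:
  assumes "finite B" "\<forall>I\<in>S. \<exists>c. (\<forall>b\<in>B. c b \<in> K) \<and> (\<Sum>b\<in>B. c b * b) \<in> I \<and> (\<Sum>b\<in>B. c b * b) \<noteq> 0"
  shows "\<exists>f :: 'a fract. f \<notin> (\<lambda>c. Fract c 1) ` K \<and> (\<forall>i\<in>{1..m}. frac_deriv (\<delta> i) f = 0)"
  using assms
proof (induction "card B" arbitrary: B rule: less_induct)
  case less
  from dich[OF less.prems(1)] show ?case
  proof
    assume "\<exists>d Lf. d \<noteq> 0 \<and> (\<forall>b\<in>B. Lf b \<in> ops \<delta> m) \<and> (\<forall>b\<in>B. \<forall>b'\<in>B. Lf b b' = (if b = b' then d else 0))"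
    then obtain d Lf where d: "d \<noteq> 0" and Lo: "\<forall>b\<in>B. Lf b \<in> ops \<delta> m"
      and Ld: "\<forall>b\<in>B. \<forall>b'\<in>B. Lf b b' = (if b = b' then d else 0)" by blast
    have "d \<in> I" if I: "I \<in> S" for I
    proof -
      obtain c where c: "\<forall>b\<in>B. c b \<in> K" "(\<Sum>b\<in>B. c b * b) \<in> I" "(\<Sum>b\<in>B. c b * b) \<noteq> 0"
        using less.prems(2) I by blast
      obtain b0 where b0: "b0 \<in> B" "c b0 \<noteq> 0"
        using c(3) by (metis (no_types, lifting) mult_zero_left sum.neutral)
      have "Lf b0 (\<Sum>b\<in>B. c b * b) = (\<Sum>b\<in>B. c b * Lf b0 b)"
        by (rule op_sum_val) (use Lo b0 less.prems(1) c in auto)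
      also have "\<dots> = (\<Sum>b\<in>B. c b * (if b = b0 then d else 0))"
        using Ld b0 by (intro sum.cong) auto
      also have "\<dots> = c b0 * d" using b0 less.prems(1) by (simp add: if_distrib cong: if_cong)
      finally have eqL: "Lf b0 (\<Sum>b\<in>B. c b * b) = c b0 * d" .
      have "Lf b0 (\<Sum>b\<in>B. c b * b) \<in> I" by (rule op_ideal) (use Lo b0 I c(2) in auto)
      then have "c b0 * d \<in> I" using eqL by simp
      moreover obtain y where "y \<in> K" "c b0 * y = 1"
        using sf c(1) b0 unfolding subfield_def by blast
      ultimately have "y * (c b0 * d) \<in> I" using idl[OF I] unfolding is_ideal_def by blast
      moreover have "y * (c b0 * d) = (c b0 * y) * d" by (simp add: ac_simps)
      ultimately show ?thesis using \<open>c b0 * y = 1\<close> by simp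
    qed
    then have "d \<in> \<Inter> S" by blast
    then show ?thesis using int0 d by simp
  next
    assume rel: "\<exists>g. (\<exists>b\<in>B. g b \<noteq> 0) \<and> (\<forall>L\<in>ops \<delta> m. (\<Sum>b\<in>B. g b * L b) = 0)"
    define R where "R g \<longleftrightarrow> (\<exists>b\<in>B. g b \<noteq> 0) \<and> (\<forall>L\<in>ops \<delta> m. (\<Sum>b\<in>B. g b * L b) = 0)" for g
    define supp where "supp g = {b\<in>B. g b \<noteq> 0}" for g :: "'a \<Rightarrow> 'a"
    obtain g0 where "R g0" using rel unfolding R_def by blast
    from ex_has_least_nat[of R g0 "\<lambda>g. card (supp g)", OF this]
    obtain g where gR: "R g" and gmin0: "\<forall>h. R h \<longrightarrow> card (supp g) \<le> card (supp h)" by blast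
    have gmin: "\<And>h. R h \<Longrightarrow> card (supp g) \<le> card (supp h)" using gmin0 by blast
    have gall: "\<forall>L\<in>ops \<delta> m. (\<Sum>b\<in>B. g b * L b) = 0" using gR R_def by blast
    obtain b0 where b0: "b0 \<in> B" "g b0 \<noteq> 0" using gR R_def by blast
    define \<beta> where "\<beta> = g b0"
    have hz: "\<beta> * \<delta> i (g b) = g b * \<delta> i \<beta>" if i: "i \<in> {1..m}" and b: "b \<in> B" for i b
    proof (rule ccontr)
      define h where "h b = \<beta> * \<delta> i (g b) - g b * \<delta> i \<beta>" for b
      assume "\<not> \<beta> * \<delta> i (g b) = g b * \<delta> i \<beta>"
      then have hb: "h b \<noteq> 0" unfolding h_def by simp
      have "R h"
        unfolding R_def
      proof (intro conjI ballI)
        show "\<exists>b\<in>B. h b \<noteq> 0" using hb b by blast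
        fix L assume L: "L \<in> ops \<delta> m"
        have s1: "(\<Sum>b\<in>B. g b * L b) = 0" using gR L R_def by blast
        have gall: "\<forall>L\<in>ops \<delta> m. (\<Sum>b\<in>B. g b * L b) = 0" using gR R_def by blast
        have s2: "(\<Sum>b\<in>B. g b * \<delta> i (L b)) = 0" using bspec[OF gall op_comp[OF L i]] by simp
        have "0 = \<delta> i (\<Sum>b\<in>B. g b * L b)" using s1 der_0[OF i] by simp
        also have "\<dots> = (\<Sum>b\<in>B. g b * \<delta> i (L b) + L b * \<delta> i (g b))"
          using der_sum[OF i less.prems(1)] der[OF i] unfolding lin_derivation_def by simp
        also have "\<dots> = (\<Sum>b\<in>B. L b * \<delta> i (g b))" using s2 by (simp add: sum.distrib)
        finally have s3: "(\<Sum>b\<in>B. L b * \<delta> i (g b)) = 0" by simp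
        have "(\<Sum>b\<in>B. h b * L b) = \<beta> * (\<Sum>b\<in>B. L b * \<delta> i (g b)) - \<delta> i \<beta> * (\<Sum>b\<in>B. g b * L b)"
          unfolding h_def by (simp add: sum_distrib_left sum_subtractf algebra_simps)
        then show "(\<Sum>b\<in>B. h b * L b) = 0" using s1 s3 by simp
      qed
      have "supp h \<subset> supp g"
      proof
        show "supp h \<subseteq> supp g" unfolding supp_def h_def using der_0[OF i] by auto
        have "b0 \<in> supp g" "b0 \<notin> supp h" using b0 unfolding supp_def h_def \<beta>_def by (auto simp: mult.commute)
        then show "supp h \<noteq> supp g" by blast
      qed
      then have "card (supp h) < card (supp g)"
        by (rule psubset_card_mono[rotated]) (simp add: supp_def less.prems(1))
      then show False using gmin[OF \<open>R h\<close>] by simp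
    qed
    have \<beta>0: "\<beta> \<noteq> 0" using b0 \<beta>_def by simp
    have fd: "frac_deriv (\<delta> i) (Fract (g b) \<beta>) = 0" if i: "i \<in> {1..m}" and b: "b \<in> B" for i b
    proof -
      have "frac_deriv (\<delta> i) (Fract (g b) \<beta>) = Fract (\<delta> i (g b) * \<beta> - g b * \<delta> i \<beta>) (\<beta> * \<beta>)"
        by (rule frac_deriv_Fract) (use der[OF i] \<beta>0 in \<open>auto simp: lin_derivation_def\<close>)
      also have "\<dots> = Fract 0 (\<beta> * \<beta>)" using hz[OF i b] by (simp add: mult.commute)
      also have "\<dots> = 0" using \<beta>0 by (simp add: Zero_fract_def eq_fract)
      finally show ?thesis .
    qed
    show ?thesis
    proof (cases "\<exists>b\<in>B. Fract (g b) \<beta> \<notin> (\<lambda>c. Fract c 1) ` K")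
      case True
      then obtain b where "b \<in> B" "Fract (g b) \<beta> \<notin> (\<lambda>c. Fract c 1) ` K" by blast
      then show ?thesis using fd by blast
    next
      case False
      then have "\<forall>b\<in>B. \<exists>kb. kb \<in> K \<and> g b = kb * \<beta>"
        using \<beta>0 by (force simp: eq_fract)
      then obtain k where k: "\<And>b. b \<in> B \<Longrightarrow> k b \<in> K \<and> g b = k b * \<beta>" by metis
      have k0: "k b0 = 1" using k[OF b0(1)] \<beta>_def \<beta>0 by (metis mult_cancel_right2)
      have "(\<Sum>b\<in>B. g b * b) = 0" using bspec[OF gall op_id] by simp
      then have "\<beta> * (\<Sum>b\<in>B. k b * b) = 0"
        using k by (simp add: sum_distrib_left algebra_simps)
      then have ks: "(\<Sum>b\<in>B. k b * b) = 0" using \<beta>0 by simp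
      define B' where "B' = B - {b0}"
      have fB': "finite B'" using less.prems(1) B'_def by simp
      have cB': "card B' < card B" using B'_def b0(1) less.prems(1) by (metis card_Diff1_less)
      have ks': "(\<Sum>b\<in>B'. k b * b) = - b0"
        using ks sum.remove[OF less.prems(1) b0(1), of "\<lambda>b. k b * b"] k0 B'_def
        by (simp add: eq_neg_iff_add_eq_0 add.commute)
      have "\<forall>I\<in>S. \<exists>c. (\<forall>b\<in>B'. c b \<in> K) \<and> (\<Sum>b\<in>B'. c b * b) \<in> I \<and> (\<Sum>b\<in>B'. c b * b) \<noteq> 0"
      proof
        fix I assume I: "I \<in> S"
        obtain c where c: "\<forall>b\<in>B. c b \<in> K" "(\<Sum>b\<in>B. c b * b) \<in> I" "(\<Sum>b\<in>B. c b * b) \<noteq> 0"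
          using less.prems(2) I by blast
        define c' where "c' b = c b - c b0 * k b" for b
        have "(\<Sum>b\<in>B'. c' b * b) = (\<Sum>b\<in>B'. c b * b) - c b0 * (\<Sum>b\<in>B'. k b * b)"
          unfolding c'_def by (simp add: sum_distrib_left sum_subtractf algebra_simps)
        also have "\<dots> = (\<Sum>b\<in>B. c b * b)"
          using ks' sum.remove[OF less.prems(1) b0(1), of "\<lambda>b. c b * b"] B'_def by simp
        finally have eq: "(\<Sum>b\<in>B'. c' b * b) = (\<Sum>b\<in>B. c b * b)" .
        have "\<forall>b\<in>B'. c' b \<in> K"
        proof
          fix b assume "b \<in> B'"
          then have "c b \<in> K" "c b0 \<in> K" "k b \<in> K" using c(1) k b0(1) B'_def by auto
          then show "c' b \<in> K" using sf unfolding subfield_def c'_def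
            by (metis diff_conv_add_uminus)
        qed
        then show "\<exists>c. (\<forall>b\<in>B'. c b \<in> K) \<and> (\<Sum>b\<in>B'. c b * b) \<in> I \<and> (\<Sum>b\<in>B'. c b * b) \<noteq> 0"
          using eq c by metis
      qed
      then show ?thesis using less.hyps[OF cB' fB'] by blast
    qed
  qed
qed

end


theorem lemma3p1:
  fixes K :: "'a::idom set" and \<delta> :: "nat \<Rightarrow> 'a \<Rightarrow> 'a" and m :: nat
    and V :: "'a set" and S :: "'a set set"
  assumes "subfield K"
    and "\<And>i. i \<in> {1..m} \<Longrightarrow> lin_derivation K (\<delta> i)"
    and "fin_dim_subspace K V"
    and "\<And>I. I \<in> S \<Longrightarrow> is_ideal I"
    and "\<And>i I. i \<in> {1..m} \<Longrightarrow> I \<in> S \<Longrightarrow> \<delta> i ` I \<subseteq> I"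
    and "\<Inter> S = {0}"
    and "\<And>I. I \<in> S \<Longrightarrow> V \<inter> I \<noteq> {0}"
  shows "\<exists>f :: 'a fract. f \<notin> (\<lambda>c. Fract c 1) ` K \<and> (\<forall>i\<in>{1..m}. frac_deriv (\<delta> i) f = 0)"
proof -
  obtain B where B: "finite B" "V = {\<Sum>b\<in>B. c b * b | c. \<forall>b\<in>B. c b \<in> K}" "0 \<in> V"
    using assms(3) unfolding fin_dim_subspace_def by blast
  have "\<forall>I\<in>S. \<exists>c. (\<forall>b\<in>B. c b \<in> K) \<and> (\<Sum>b\<in>B. c b * b) \<in> I \<and> (\<Sum>b\<in>B. c b * b) \<noteq> 0"
  proof
    fix I assume I: "I \<in> S"
    have "0 \<in> I" using assms(4)[OF I] unfolding is_ideal_def by blast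
    then obtain v where v: "v \<in> V" "v \<in> I" "v \<noteq> 0" using assms(7)[OF I] B(3) by blast
    then obtain c where "\<forall>b\<in>B. c b \<in> K" "v = (\<Sum>b\<in>B. c b * b)" using B(2) by blast
    then show "\<exists>c. (\<forall>b\<in>B. c b \<in> K) \<and> (\<Sum>b\<in>B. c b * b) \<in> I \<and> (\<Sum>b\<in>B. c b * b) \<noteq> 0"
      using v by blast
  qed
  moreover have "\<And>i. i \<in> {1..m} \<Longrightarrow> lin_derivation K (\<delta> i)" by (rule assms(2))
  moreover have "\<And>i I. i \<in> {1..m} \<Longrightarrow> I \<in> S \<Longrightarrow> \<delta> i ` I \<subseteq> I" by (rule assms(5))
  ultimately show ?thesis using main[of K m \<delta> S B] assms(1,4,6) B(1) by blast
qed

end
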